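(* Let $f:\mathbb{R}^m\to\mathbb{R}\cup\{+\infty\}$ be a proper lower semicontinuous convex function such that $\mathrm{bdry}(S_f)\subseteq f^{-1}(0)$. Consider the statements: (i) there exists $\tau\in(0,+\infty)$ such that $\inf\left\{\left|\min_{\|h\|=1}f'(\bar x,h)\right|:\bar x\in\mathrm{bdry}(S_f)\right\}>\tau$; (ii) there exist constants $c,\varepsilon\in(0,+\infty)$ such that for every proper lsc convex $g:\mathbb{R}^m\to\mathbb{R}\cup\{+\infty\}$ satisfying $S_f\subseteq S_g$ and $\mathrm{Lip}(f-g)<\varepsilon$, one has $\tau_{\min}(g)\le c$; (iii) there exist constants $c,\varepsilon\in(0,+\infty)$ such that for every proper lsc convex $g:\mathbb{R}^m\to\mathbb{R}\cup\{+\infty\}$ satisfying $\mathrm{bdry}(S_f)\cap g^{-1}(0)\neq\emptyset$ and $\mathrm{Lip}(f-g)<\varepsilon$, one has $\tau_{\min}(g)\le c$. Then (i) implies (ii), and (iii) implies (i).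
   Context: $\mathbb{R}^m$ carries the Euclidean norm, $d(x,D)=\inf\{\|x-y\|:y\in D\}$, $\mathrm{bdry}(D)$ is the boundary of $D$. $f'(\bar x,h):=\lim_{t\to0^+}\frac{f(\bar x+th)-f(\bar x)}{t}$ is the directional derivative. For a proper lsc convex $g$, $S_g:=\{x: g(x)\le0\}$ and the global error bound modulus is $\tau_{\min}(g):=\inf\{\tau>0: d(x,S_g)\le\tau[g(x)]_+\ \forall x\in\mathbb{R}^m\}$, where $[t]_+=\max\{t,0\}$ and $\inf\emptyset=+\infty$. For a map $\phi$, $\mathrm{Lip}(\phi):=\sup_{u\neq v}\frac{|\phi(u)-\phi(v)|}{\|u-v\|}$. *)

theory Defs
  imports "HOL-Analysis.Analysis"
begin

definition proper_fun :: "('a \<Rightarrow> ereal) \<Rightarrow> bool" where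
  "proper_fun f \<longleftrightarrow> (\<forall>x. f x \<noteq> -\<infinity>) \<and> (\<exists>x. f x \<noteq> \<infinity>)"

definition lsc_fun :: "('a::topological_space \<Rightarrow> ereal) \<Rightarrow> bool" where
  "lsc_fun f \<longleftrightarrow> (\<forall>x. f x \<le> Liminf (at x) f)"

definition convex_fun :: "('a::real_vector \<Rightarrow> ereal) \<Rightarrow> bool" where
  "convex_fun f \<longleftrightarrow> convex {(x, t::real). f x \<le> ereal t}"

definition plsc_convex :: "('a::euclidean_space \<Rightarrow> ereal) \<Rightarrow> bool" where
  "plsc_convex f \<longleftrightarrow> proper_fun f \<and> lsc_fun f \<and> convex_fun f"

definition sublev :: "('a \<Rightarrow> ereal) \<Rightarrow> 'a set" where
  "sublev g = {x. g x \<le> 0}"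

text \<open>d(x,D) = inf {||x-y|| : y in D}, with inf of the empty set = +infinity.\<close>
definition setdist_e :: "'a::metric_space \<Rightarrow> 'a set \<Rightarrow> ereal" where
  "setdist_e x D = (INF y\<in>D. ereal (dist x y))"

text \<open>Global error bound modulus tau_min(g) (inf of the empty set = +infinity).\<close>
definition tau_min :: "('a::metric_space \<Rightarrow> ereal) \<Rightarrow> ereal" where
  "tau_min g = Inf {ereal \<tau> | \<tau>. \<tau> > 0 \<and>
       (\<forall>x. setdist_e x (sublev g) \<le> ereal \<tau> * max (g x) 0)}"

definition dir_deriv :: "('a::real_normed_vector \<Rightarrow> ereal) \<Rightarrow> 'a \<Rightarrow> 'a \<Rightarrow> ereal" where
  "dir_deriv f x h = Lim (at_right 0) (\<lambda>t::real. (f (x + t *\<^sub>R h) - f x) / ereal t)"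

text \<open>Lip(f - g): the difference f - g is taken on the common effective domain;
  if the effective domains differ, f - g takes the value +infinity at some point
  where the other function is finite, and Lip(f - g) = +infinity.\<close>
definition lip_diff :: "('a::real_normed_vector \<Rightarrow> ereal) \<Rightarrow> ('a \<Rightarrow> ereal) \<Rightarrow> ereal" where
  "lip_diff f g =
     (if {x. f x \<noteq> \<infinity>} = {x. g x \<noteq> \<infinity>} then
        (SUP (u, v) \<in> {(u, v). f u \<noteq> \<infinity> \<and> f v \<noteq> \<infinity> \<and> u \<noteq> v}.
           ereal (\<bar>(real_of_ereal (f u) - real_of_ereal (g u))
                    - (real_of_ereal (f v) - real_of_ereal (g v))\<bar> / norm (u - v)))
      else \<infinity>)"

end

theory Submission
  imports Defs
begin


lemma conv_ineq:
  assumes "convex_fun f" "f a \<le> ereal \<alpha>" "f b \<le> ereal \<beta>" "0 \<le> l" "l \<le> 1"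
  shows "f ((1-l) *\<^sub>R a + l *\<^sub>R b) \<le> ereal ((1-l)*\<alpha> + l*\<beta>)"
proof -
  have c: "convex {(x, t::real). f x \<le> ereal t}" using assms(1) unfolding convex_fun_def .
  have "(1-l) *\<^sub>R (a,\<alpha>) + l *\<^sub>R (b,\<beta>) \<in> {(x, t::real). f x \<le> ereal t}"
    apply (rule convexD[OF c]) using assms by auto
  then show ?thesis by simp
qed

lemma lsc_closed:
  assumes "lsc_fun f"
  shows "closed {x. f x \<le> a}"
proof -
  have "open {x. a < f x}"
  proof (subst open_subopen, intro ballI)
    fix x assume "x \<in> {x. a < f x}"
    then have "a < Liminf (at x) f" using assms unfolding lsc_fun_def
      by (metis mem_Collect_eq order_less_le_trans)
    then have "eventually (\<lambda>y. a < f y) (at x)" using le_Liminf_iff by blast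
    then obtain S where "open S" "x \<in> S" "\<forall>y\<in>S. y \<noteq> x \<longrightarrow> a < f y"
      unfolding eventually_at_topological by blast
    then show "\<exists>T. open T \<and> x \<in> T \<and> T \<subseteq> {x. a < f x}"
      using \<open>x \<in> {x. a < f x}\<close> by (intro exI[of _ S]) auto
  qed
  moreover have "{x. f x \<le> a} = - {x. a < f x}" by auto
  ultimately show ?thesis by (simp add: closed_def)
qed

lemma sublev_convex:
  assumes "convex_fun f" shows "convex (sublev f)"
proof (rule convexI)
  fix x y and u v :: real assume xy: "x \<in> sublev f" "y \<in> sublev f" and uv: "0 \<le> u" "0 \<le> v" "u + v = 1"
  then have "f ((1-v) *\<^sub>R x + v *\<^sub>R y) \<le> ereal 0"
    using conv_ineq[OF assms, of x 0 y 0 v] by (auto simp: sublev_def zero_ereal_def)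
  moreover have "u = 1 - v" using uv by simp
  ultimately show "u *\<^sub>R x + v *\<^sub>R y \<in> sublev f" by (simp add: sublev_def zero_ereal_def)
qed

lemma dd_inf:
  fixes f :: "'a::real_normed_vector \<Rightarrow> ereal"
  assumes cf: "convex_fun f" and f0: "f x0 = 0" and pr: "\<And>x. f x \<noteq> -\<infinity>"
  shows "dir_deriv f x0 h = (INF t\<in>{0<..}. f (x0 + t *\<^sub>R h) / ereal t)"
proof -
  define Q where "Q t = f (x0 + t *\<^sub>R h) / ereal t" for t
  have mono: "Q s \<le> Q t" if "0 < s" "s < t" for s t
  proof (cases "f (x0 + t *\<^sub>R h) = \<infinity>")
    case True then show ?thesis using that by (simp add: Q_def)
  next
    case False
    then obtain \<beta> where b: "f (x0 + t *\<^sub>R h) \<le> ereal \<beta>" "f (x0 + t *\<^sub>R h) = ereal \<beta>"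
      using pr by (cases "f (x0 + t *\<^sub>R h)") auto
    have "f ((1 - s/t) *\<^sub>R x0 + (s/t) *\<^sub>R (x0 + t *\<^sub>R h)) \<le> ereal ((1-s/t)*0 + (s/t)*\<beta>)"
      apply (rule conv_ineq[OF cf]) using f0 b that by (auto simp: zero_ereal_def)
    moreover have "(1 - s/t) *\<^sub>R x0 + (s/t) *\<^sub>R (x0 + t *\<^sub>R h) = x0 + s *\<^sub>R h"
      using that by (simp add: algebra_simps)
    ultimately have le: "f (x0 + s *\<^sub>R h) \<le> ereal (s/t*\<beta>)" by simp
    have "Q s \<le> ereal (s/t*\<beta>) / ereal s" unfolding Q_def
      using that le by (intro ereal_divide_right_mono) auto
    also have "\<dots> = ereal (\<beta>/t)" using that by simp
    also have "\<dots> = Q t" unfolding Q_def using b that by simp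
    finally show ?thesis .
  qed
  have "(Q \<longlongrightarrow> (INF t\<in>{0<..}. Q t)) (at_right 0)"
  proof (rule order_tendstoI)
    fix a assume "a < (INF t\<in>{0<..}. Q t)"
    then have "\<forall>t>0. a < Q t" by (metis INF_lower greaterThan_iff order_less_le_trans)
    then show "\<forall>\<^sub>F t in at_right 0. a < Q t"
      using eventually_at_right_less[of "0::real"] by (auto elim: eventually_mono)
  next
    fix a assume "(INF t\<in>{0<..}. Q t) < a"
    then obtain t1 where t1: "t1 > 0" "Q t1 < a" by (auto simp: INF_less_iff)
    have "\<forall>\<^sub>F t in at_right 0. t \<in> {0<..<t1}" using eventually_at_right_real t1 by blast
    then show "\<forall>\<^sub>F t in at_right 0. Q t < a"
      by eventually_elim (use mono t1 in \<open>force intro: order_le_less_trans\<close>)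
  qed
  then have "Lim (at_right 0) Q = (INF t\<in>{0<..}. Q t)" by (rule tendsto_Lim[rotated]) simp
  then show ?thesis unfolding dir_deriv_def Q_def using f0 by simp
qed

lemma lsc_add:
  fixes f :: "'a::topological_space \<Rightarrow> ereal"
  assumes lf: "lsc_fun f" and pr: "\<And>x. f x \<noteq> -\<infinity>" and ce: "continuous_on UNIV e"
  shows "lsc_fun (\<lambda>x. f x + ereal (e x))"
  unfolding lsc_fun_def
proof (intro allI)
  fix x
  show "f x + ereal (e x) \<le> Liminf (at x) (\<lambda>x. f x + ereal (e x))"
  proof (subst le_Liminf_iff, intro allI impI)
    fix y assume y: "y < f x + ereal (e x)"
    show "\<forall>\<^sub>F z in at x. y < f z + ereal (e z)"
    proof (cases y)
      case MInf
      have "\<forall>z. y < f z + ereal (e z)"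
      proof
        fix z show "y < f z + ereal (e z)" using pr[of z] MInf by (cases "f z") auto
      qed
      then show ?thesis by (intro always_eventually)
    next
      case PInf then show ?thesis using y by simp
    next
      case (real y0)
      obtain k where k: "k > 0" "ereal (y0 - e x + k) < f x"
      proof (cases "f x")
        case (real fx)
        then show ?thesis using y \<open>y = ereal y0\<close>
          by (intro that[of "(fx - (y0 - e x))/2"]) (auto simp: field_simps)
      next
        case PInf then show ?thesis by (intro that[of 1]) auto
      next
        case MInf then show ?thesis using pr by auto
      qed
      have "ereal (y0 - e x + k) < Liminf (at x) f" using k lf unfolding lsc_fun_def
        by (metis order_less_le_trans)
      then have ev1: "\<forall>\<^sub>F z in at x. ereal (y0 - e x + k) < f z" using le_Liminf_iff by blast
      have "(e \<longlongrightarrow> e x) (at x)" using ce by (simp add: continuous_on_def)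
      then have ev2: "\<forall>\<^sub>F z in at x. e x - k < e z" using k by (intro order_tendstoD) auto
      show ?thesis using ev1 ev2
      proof eventually_elim
        case (elim z)
        then show ?case using \<open>y = ereal y0\<close> pr[of z] by (cases "f z") auto
      qed
    qed
  qed
qed

lemma convex_add:
  fixes f :: "'a::real_vector \<Rightarrow> ereal"
  assumes cf: "convex_fun f" and pr: "\<And>x. f x \<noteq> -\<infinity>" and ce: "convex_on UNIV e"
  shows "convex_fun (\<lambda>x. f x + ereal (e x))"
  unfolding convex_fun_def
proof (rule convexI, clarsimp)
  fix a b :: 'a and t1 t2 u v :: real
  assume h: "f a + ereal (e a) \<le> ereal t1" "f b + ereal (e b) \<le> ereal t2" "0 \<le> u" "0 \<le> v" "u + v = 1"
  have ha: "f a \<le> ereal (t1 - e a)" using h(1) pr[of a] by (cases "f a") auto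
  have hb: "f b \<le> ereal (t2 - e b)" using h(2) pr[of b] by (cases "f b") auto
  have uv: "u = 1 - v" using h by simp
  have "f ((1-v) *\<^sub>R a + v *\<^sub>R b) \<le> ereal ((1-v) * (t1 - e a) + v * (t2 - e b))"
    using conv_ineq[OF cf ha hb] h by simp
  moreover have "e ((1-v) *\<^sub>R a + v *\<^sub>R b) \<le> (1-v) * e a + v * e b"
    using ce h unfolding convex_on_def by (simp add: uv)
  ultimately have "f ((1-v) *\<^sub>R a + v *\<^sub>R b) + ereal (e ((1-v) *\<^sub>R a + v *\<^sub>R b)) \<le> ereal ((1-v) * t1 + v * t2)"
    using pr by (cases "f ((1-v) *\<^sub>R a + v *\<^sub>R b)") (auto simp: algebra_simps)
  then show "f (u *\<^sub>R a + v *\<^sub>R b) + ereal (e (u *\<^sub>R a + v *\<^sub>R b)) \<le> ereal (u * t1 + v * t2)"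
    by (simp add: uv)
qed

lemma lemA:
  fixes f :: "'a::real_inner \<Rightarrow> ereal"
  assumes cf: "convex_fun f" and pr: "\<And>x. f x \<noteq> -\<infinity>" and fp: "f p = 0"
    and dot: "\<And>y. f y \<le> 0 \<Longrightarrow> inner (x - p) (y - p) \<le> 0"
    and fx: "f x = ereal fx" and r: "norm (x - p) = r" "r > 0" and tau: "\<tau> > 0"
    and M: "\<bar>INF h\<in>sphere 0 1. dir_deriv f p h\<bar> > ereal \<tau>"
  shows "\<tau> * r \<le> fx"
proof -
  define u where "u = (1/r) *\<^sub>R (x - p)"
  have nu: "norm u = 1" using r by (simp add: u_def)
  have xu: "p + r *\<^sub>R u = x" using r by (simp add: u_def)
  have DD: "\<And>h. dir_deriv f p h = (INF t\<in>{0<..}. f (p + t *\<^sub>R h) / ereal t)"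
    using dd_inf[OF cf fp pr] by blast
  define M' where "M' = (INF h\<in>sphere 0 1. dir_deriv f p h)"
  have "M' > ereal \<tau> \<or> M' < ereal (-\<tau>)" using M tau unfolding M'_def[symmetric]
    by (cases M') auto
  then show ?thesis
  proof
    assume A: "M' > ereal \<tau>"
    have "M' \<le> dir_deriv f p u" unfolding M'_def using nu by (intro INF_lower) auto
    also have "\<dots> \<le> f (p + r *\<^sub>R u) / ereal r" unfolding DD using r by (intro INF_lower) auto
    also have "\<dots> = ereal (fx / r)" using xu fx r by simp
    finally have "ereal \<tau> < ereal (fx / r)" using A by (rule order.strict_trans2[rotated])
    then have "\<tau> < fx / r" by simp
    then show ?thesis using r by (simp add: field_simps)
  next
    assume A: "M' < ereal (-\<tau>)"
    then obtain h where h: "h \<in> sphere 0 1" "dir_deriv f p h < ereal (-\<tau>)"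
      unfolding M'_def by (auto simp: INF_less_iff)
    then obtain t where t: "t > 0" "f (p + t *\<^sub>R h) / ereal t < ereal (-\<tau>)"
      unfolding DD by (auto simp: INF_less_iff)
    obtain ft where ft: "f (p + t *\<^sub>R h) = ereal ft"
      using t pr by (cases "f (p + t *\<^sub>R h)") auto
    have ft2: "ft < -\<tau> * t" using t ft by (simp add: field_simps)
    have nh: "norm h = 1" using h by simp
    show ?thesis
    proof (rule ccontr)
      assume "\<not> ?thesis"
      then have fxl: "fx < \<tau> * r" by simp
      define s where "s = min r t"
      have s: "s > 0" "s \<le> r" "s \<le> t" using r t by (auto simp: s_def)
      have e1: "(1 - s/r) *\<^sub>R p + (s/r) *\<^sub>R x = p + s *\<^sub>R u"
        using r by (simp add: u_def algebra_simps)
      have f1: "f (p + s *\<^sub>R u) \<le> ereal ((1 - s/r) * 0 + (s/r) * fx)"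
        unfolding e1[symmetric] using s r fp fx
        by (intro conv_ineq[OF cf]) (auto simp: zero_ereal_def)
      have e2: "(1 - s/t) *\<^sub>R p + (s/t) *\<^sub>R (p + t *\<^sub>R h) = p + s *\<^sub>R h"
        using t by (simp add: algebra_simps)
      have f2: "f (p + s *\<^sub>R h) \<le> ereal ((1 - s/t) * 0 + (s/t) * ft)"
        unfolding e2[symmetric] using s t fp ft
        by (intro conv_ineq[OF cf]) (auto simp: zero_ereal_def)
      define y where "y = p + (s/2) *\<^sub>R (u + h)"
      have e3: "(1 - 1/2) *\<^sub>R (p + s *\<^sub>R u) + (1/2) *\<^sub>R (p + s *\<^sub>R h) = y"
        by (simp add: y_def algebra_simps flip: scaleR_add_left)
      have f3: "f y \<le> ereal ((1 - 1/2) * ((1 - s/r) * 0 + (s/r) * fx) + (1/2) * ((1 - s/t) * 0 + (s/t) * ft))"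
        unfolding e3[symmetric] using f1 f2 by (intro conv_ineq[OF cf]) auto
      have a1: "(s/r) * fx < \<tau> * s"
      proof -
        have "(s/r) * fx < (s/r) * (\<tau> * r)" using fxl s r by (intro mult_strict_left_mono) auto
        then show ?thesis using r by (simp add: mult.commute)
      qed
      have a2: "(s/t) * ft < - (\<tau> * s)"
      proof -
        have "(s/t) * ft < (s/t) * (-\<tau> * t)" using ft2 s t by (intro mult_strict_left_mono) auto
        then show ?thesis using t by (simp add: mult.commute)
      qed
      have fyneg: "f y < 0"
      proof -
        have "(1 - 1/2) * ((1 - s/r) * 0 + (s/r) * fx) + (1/2) * ((1 - s/t) * 0 + (s/t) * ft) = ((s/r) * fx + (s/t) * ft) / 2"
          by simp
        also have "\<dots> < 0"
        proof -
          have "(s/r) * fx + (s/t) * ft < \<tau> * s + - (\<tau> * s)" using a1 a2 by (rule add_strict_mono)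
          then show ?thesis by simp
        qed
        finally have "ereal ((1 - 1/2) * ((1 - s/r) * 0 + (s/r) * fx) + (1/2) * ((1 - s/t) * 0 + (s/t) * ft)) < 0"
          by (simp add: zero_ereal_def)
        with f3 show ?thesis by (rule order.strict_trans1)
      qed
      then have "inner (x - p) (y - p) \<le> 0" using dot by simp
      moreover have "x - p = r *\<^sub>R u" using xu by (simp add: algebra_simps)
      moreover have "y - p = (s/2) *\<^sub>R (u + h)" by (simp add: y_def)
      ultimately have "r * (s/2) * inner u (u + h) \<le> 0" by (simp add: algebra_simps)
      then have i1: "inner u (u + h) \<le> 0" using r s
        by (metis divide_pos_pos mult_pos_pos mult_le_0_iff not_less zero_less_numeral)
      have "inner (u + h) (u + h) = inner u (u + h) + inner h u + inner h h"
        by (simp add: inner_add_left inner_add_right)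
      also have "inner h u = inner u (u + h) - 1"
        using nu by (simp add: inner_add_right inner_commute dot_square_norm power2_eq_square[symmetric])
      also have "inner h h = 1" using nh by (simp add: dot_square_norm)
      finally have "inner (u + h) (u + h) \<le> 0" using i1 by simp
      then have "u + h = 0" by (metis inner_gt_zero_iff not_le)
      then have "y = p" by (simp add: y_def)
      then show False using fyneg fp by simp
    qed
  qed
qed

lemma part1:
  fixes f :: "real ^ 'm \<Rightarrow> ereal"
  assumes hf: "plsc_convex f"
    and hS: "sublev f \<noteq> {}"
    and hbd: "frontier (sublev f) \<subseteq> f -` {0}"
    and tau: "\<tau> > 0"
    and hi: "(INF xb\<in>frontier (sublev f). \<bar>INF h\<in>sphere 0 1. dir_deriv f xb h\<bar>) > ereal \<tau>"
  shows "\<exists>c \<epsilon>::real. c > 0 \<and> \<epsilon> > 0 \<and>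
      (\<forall>g :: real ^ 'm \<Rightarrow> ereal. plsc_convex g \<and> sublev f \<subseteq> sublev g
          \<and> lip_diff f g < ereal \<epsilon> \<longrightarrow> tau_min g \<le> ereal c)"
proof (rule exI[of _ "2/\<tau>"], rule exI[of _ "\<tau>/2"], intro conjI allI impI)
  show "2/\<tau> > 0" using tau by auto
  show "\<tau>/2 > 0" using tau by auto
  have cf: "convex_fun f" and lf: "lsc_fun f" and pr: "\<And>x. f x \<noteq> -\<infinity>"
    using hf unfolding plsc_convex_def proper_fun_def by auto
  define S where "S = sublev f"
  have Scl: "closed S" unfolding S_def sublev_def by (rule lsc_closed[OF lf])
  have Scv: "convex S" unfolding S_def by (rule sublev_convex[OF cf])
  have Sne: "S \<noteq> {}" using hS by (simp add: S_def)
  have Mfr: "\<bar>INF h\<in>sphere 0 1. dir_deriv f xb h\<bar> > ereal \<tau>" if "xb \<in> frontier S" for xb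
    using hi that unfolding S_def by (meson INF_lower order_less_le_trans)
  fix g :: "real ^ 'm \<Rightarrow> ereal"
  assume G: "plsc_convex g \<and> sublev f \<subseteq> sublev g \<and> lip_diff f g < ereal (\<tau>/2)"
  have prg: "\<And>x. g x \<noteq> -\<infinity>" using G unfolding plsc_convex_def proper_fun_def by auto
  have sub: "S \<subseteq> sublev g" using G by (simp add: S_def)
  have dom: "{x. f x \<noteq> \<infinity>} = {x. g x \<noteq> \<infinity>}"
  proof (rule ccontr)
    assume "{x. f x \<noteq> \<infinity>} \<noteq> {x. g x \<noteq> \<infinity>}"
    then have "lip_diff f g = \<infinity>" unfolding lip_diff_def by simp
    then show False using G by simp
  qed
  define D where "D w = real_of_ereal (f w) - real_of_ereal (g w)" for w
  have lip: "\<bar>D u - D v\<bar> \<le> (\<tau>/2) * norm (u - v)" if "f u \<noteq> \<infinity>" "f v \<noteq> \<infinity>" for u v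
  proof (cases "u = v")
    case True then show ?thesis by simp
  next
    case False
    have mem: "(u,v) \<in> {(u, v). f u \<noteq> \<infinity> \<and> f v \<noteq> \<infinity> \<and> u \<noteq> v}" using that False by simp
    have eq: "lip_diff f g = (SUP (u, v) \<in> {(u, v). f u \<noteq> \<infinity> \<and> f v \<noteq> \<infinity> \<and> u \<noteq> v}.
           ereal (\<bar>(real_of_ereal (f u) - real_of_ereal (g u))
                    - (real_of_ereal (f v) - real_of_ereal (g v))\<bar> / norm (u - v)))"
      unfolding lip_diff_def by (rule if_P[OF dom])
    have "ereal (\<bar>D u - D v\<bar> / norm (u - v)) \<le> lip_diff f g"
      unfolding eq D_def using SUP_upper[OF mem, of "\<lambda>(u,v). ereal (\<bar>(real_of_ereal (f u) - real_of_ereal (g u))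
                    - (real_of_ereal (f v) - real_of_ereal (g v))\<bar> / norm (u - v))"]
      by simp
    also have "\<dots> < ereal (\<tau>/2)" using G by simp
    finally have "\<bar>D u - D v\<bar> / norm (u - v) < \<tau>/2" by simp
    then show ?thesis using False by (simp add: divide_less_eq less_imp_le)
  qed
  have key: "\<forall>x. setdist_e x (sublev g) \<le> ereal (2/\<tau>) * max (g x) 0"
  proof (intro allI)
    fix x
    show "setdist_e x (sublev g) \<le> ereal (2/\<tau>) * max (g x) 0"
    proof (cases "g x")
      case PInf then show ?thesis using tau by simp
    next
      case MInf then show ?thesis using prg by simp
    next
      case (real \<gamma>)
      show ?thesis
      proof (cases "\<gamma> \<le> 0")
        case True
        then have "x \<in> sublev g" using real by (simp add: sublev_def zero_ereal_def)
        then have "setdist_e x (sublev g) \<le> ereal (dist x x)" unfolding setdist_e_def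
          by (rule INF_lower)
        then show ?thesis using True real tau by (simp add: max_def zero_ereal_def)
      next
        case False
        then have gp: "\<gamma> > 0" by simp
        have rhs: "ereal (2/\<tau>) * max (g x) 0 = ereal (2 * \<gamma> / \<tau>)" using real gp
          by (simp add: max_def zero_ereal_def)
        have "x \<in> {x. f x \<noteq> \<infinity>}" unfolding dom using real by simp
        then have "f x \<noteq> \<infinity>" by simp
        then obtain fx where fx: "f x = ereal fx" using pr by (cases "f x") auto
        have xS: "x \<notin> S"
        proof
          assume "x \<in> S"
          then have "x \<in> sublev g" using sub by blast
          then have "g x \<le> 0" by (simp add: sublev_def)
          then show False using real gp by (simp add: zero_ereal_def)
        qed
        define p where "p = closest_point S x"
        have pS: "p \<in> S" unfolding p_def by (rule closest_point_in_set[OF Scl Sne])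
        have pmin: "\<forall>y\<in>S. dist x p \<le> dist x y" unfolding p_def using closest_point_exists[OF Scl Sne] by blast
        have pdot: "\<And>y. y \<in> S \<Longrightarrow> inner (x - p) (y - p) \<le> 0"
          unfolding p_def by (rule closest_point_dot[OF Scv Scl])
        define r where "r = norm (x - p)"
        have "p \<noteq> x" using pS xS by blast
        then have rpos: "r > 0" by (simp add: r_def)
        have pfr: "p \<in> frontier S"
        proof -
          have "p \<notin> interior S"
          proof
            assume "p \<in> interior S"
            then obtain e where e: "e > 0" "ball p e \<subseteq> S" using mem_interior by blast
            define s where "s = min (e/2) (r/2)"
            have s: "s > 0" "s < e" "s < r" using e rpos by (auto simp: s_def)
            define y where "y = p + (s/r) *\<^sub>R (x - p)"
            have "dist p y = s" using s rpos by (simp add: y_def dist_norm r_def)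
            then have "y \<in> S" using e s by auto
            have "x - y = (1 - s/r) *\<^sub>R (x - p)" by (simp add: y_def algebra_simps)
            then have "dist x y = (1 - s/r) * r" using s rpos by (simp add: dist_norm r_def)
            also have "\<dots> < r" using s rpos by (simp add: algebra_simps)
            finally have "dist x y < dist x p" by (simp add: r_def dist_norm)
            then show False using pmin \<open>y \<in> S\<close> by (meson not_le)
          qed
          then show ?thesis using pS closure_subset by (auto simp: frontier_def)
        qed
        have fp: "f p = 0" using hbd pfr unfolding S_def by auto
        have A: "\<tau> * r \<le> fx"
          by (rule lemA[OF cf pr fp _ fx r_def[symmetric] rpos tau Mfr[OF pfr]])
             (use pdot in \<open>auto simp: S_def sublev_def\<close>)
        show ?thesis
        proof (cases "r \<le> 2 * \<gamma> / \<tau>")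
          case True
          have "p \<in> sublev g" using sub pS by auto
          then have "setdist_e x (sublev g) \<le> ereal (dist x p)" unfolding setdist_e_def
            by (rule INF_lower)
          moreover have "ereal (dist x p) \<le> ereal (2 * \<gamma> / \<tau>)" using True by (simp add: dist_norm r_def)
          ultimately show ?thesis unfolding rhs by (rule order_trans)
        next
          case False
          define s1 where "s1 = r - 2 * \<gamma> / \<tau>"
          have s1: "s1 > 0" "s1 < r" using False gp tau by (auto simp: s1_def)
          define z where "z = (1 - s1/r) *\<^sub>R p + (s1/r) *\<^sub>R x"
          have fz: "f z \<le> ereal ((1 - s1/r) * 0 + (s1/r) * fx)"
            unfolding z_def using s1 fx fp by (intro conv_ineq[OF cf]) (auto simp: zero_ereal_def)
          then obtain fzr where fzr: "f z = ereal fzr" "fzr \<le> (s1/r) * fx"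
            using pr[of z] by (cases "f z") auto
          have "z \<in> {x. g x \<noteq> \<infinity>}" unfolding dom[symmetric] using fzr by simp
          then have "g z \<noteq> \<infinity>" by simp
          then obtain gz where gz: "g z = ereal gz" using prg[of z] by (cases "g z") auto
          have xz: "x - z = (1 - s1/r) *\<^sub>R (x - p)" by (simp add: z_def algebra_simps)
          have nxz: "norm (x - z) = r - s1"
          proof -
            have "norm (x - z) = \<bar>1 - s1/r\<bar> * r" unfolding xz norm_scaleR r_def ..
            also have "\<bar>1 - s1/r\<bar> = 1 - s1/r" using s1 rpos by simp
            also have "(1 - s1/r) * r = r - s1" using rpos by (simp add: field_simps)
            finally show ?thesis .
          qed
          have L: "\<bar>D x - D z\<bar> \<le> (\<tau>/2) * (r - s1)" using lip[of x z] fx fzr nxz by simp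
          have Dx: "D x = fx - \<gamma>" using fx real by (simp add: D_def)
          have Dz: "D z = fzr - gz" using fzr gz by (simp add: D_def)
          have K: "((r - s1)/r) * fx \<ge> ((r - s1)/r) * (\<tau> * r)"
            using A s1 by (intro mult_left_mono) auto
          have K2: "((r - s1)/r) * (\<tau> * r) = \<tau> * (r - s1)" using rpos by simp
          have K3: "(s1/r) * fx = fx - ((r - s1)/r) * fx" using rpos by (simp add: field_simps)
          have K4: "\<tau> * (r - s1) = 2 * \<gamma>" using tau by (simp add: s1_def)
          have K5: "(\<tau>/2) * (r - s1) = \<gamma>" using K4 by simp
          have L2: "\<bar>D x - D z\<bar> \<le> \<gamma>" using L K5 by simp
          have P: "((r - s1)/r) * fx \<ge> 2 * \<gamma>" using K K2 K4 by simp
          have fz2: "fzr \<le> fx - 2 * \<gamma>" using fzr(2) K3 P by linarith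
          have "gz \<le> 0" using L2 Dx Dz fz2 by linarith
          then have "z \<in> sublev g" using gz by (simp add: sublev_def zero_ereal_def)
          then have "setdist_e x (sublev g) \<le> ereal (dist x z)" unfolding setdist_e_def
            by (rule INF_lower)
          also have "dist x z = 2 * \<gamma> / \<tau>" using nxz by (simp add: dist_norm s1_def)
          finally show ?thesis unfolding rhs .
        qed
      qed
    qed
  qed
  show "tau_min g \<le> ereal (2/\<tau>)"
    unfolding tau_min_def using key tau by (intro Inf_lower) auto
qed

lemma part2:
  fixes f :: "real ^ 'm \<Rightarrow> ereal"
  assumes hf: "plsc_convex f"
    and hbd: "frontier (sublev f) \<subseteq> f -` {0}"
    and cpos: "c > 0" and epos: "\<epsilon> > 0"
    and H: "\<forall>g :: real ^ 'm \<Rightarrow> ereal. plsc_convex g \<and> frontier (sublev f) \<inter> g -` {0} \<noteq> {}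
          \<and> lip_diff f g < ereal \<epsilon> \<longrightarrow> tau_min g \<le> ereal c"
  shows "\<exists>\<tau>::real. \<tau> > 0 \<and>
      (INF xb\<in>frontier (sublev f). \<bar>INF h\<in>sphere 0 1. dir_deriv f xb h\<bar>) > ereal \<tau>"
proof (rule ccontr)
  assume nt: "\<not> ?thesis"
  have cf: "convex_fun f" and lf: "lsc_fun f" and pr: "\<And>x. f x \<noteq> -\<infinity>"
    and ex: "\<exists>x. f x \<noteq> \<infinity>"
    using hf unfolding plsc_convex_def proper_fun_def by auto
  define \<delta> where "\<delta> = min \<epsilon> (1/c) / 8"
  have dpos: "\<delta> > 0" using cpos epos by (simp add: \<delta>_def)
  have d1: "8 * \<delta> \<le> \<epsilon>" "8 * \<delta> \<le> 1/c" by (auto simp: \<delta>_def)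
  have "\<not> (INF xb\<in>frontier (sublev f). \<bar>INF h\<in>sphere 0 1. dir_deriv f xb h\<bar>) > ereal \<delta>"
    using nt dpos by blast
  then have "(INF xb\<in>frontier (sublev f). \<bar>INF h\<in>sphere 0 1. dir_deriv f xb h\<bar>) < ereal (2 * \<delta>)"
  proof -
    have "ereal \<delta> < ereal (2 * \<delta>)" using dpos by simp
    moreover have "(INF xb\<in>frontier (sublev f). \<bar>INF h\<in>sphere 0 1. dir_deriv f xb h\<bar>) \<le> ereal \<delta>"
      using \<open>\<not> _ > ereal \<delta>\<close> by (simp only: not_less)
    ultimately show ?thesis by (rule order.strict_trans1[rotated])
  qed
  then obtain xb where xb: "xb \<in> frontier (sublev f)"
    and Mx: "\<bar>INF h\<in>sphere 0 1. dir_deriv f xb h\<bar> < ereal (2 * \<delta>)"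
    by (auto simp: INF_less_iff)
  have fxb: "f xb = 0" using hbd xb by auto
  obtain m where m: "(INF h\<in>sphere 0 1. dir_deriv f xb h) = ereal m" "\<bar>m\<bar> < 2 * \<delta>"
    using Mx by (cases "INF h\<in>sphere 0 1. dir_deriv f xb h") auto
  have DD: "\<And>h. dir_deriv f xb h = (INF t\<in>{0<..}. f (xb + t *\<^sub>R h) / ereal t)"
    using dd_inf[OF cf fxb pr] by blast
  have lower: "ereal m \<le> f (xb + t *\<^sub>R u) / ereal t" if "norm u = 1" "t > 0" for u t
  proof -
    have "ereal m \<le> dir_deriv f xb u" unfolding m(1)[symmetric] using that by (intro INF_lower) auto
    also have "\<dots> \<le> f (xb + t *\<^sub>R u) / ereal t" unfolding DD using that by (intro INF_lower) auto
    finally show ?thesis .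
  qed
  have "(INF h\<in>sphere 0 1. dir_deriv f xb h) < ereal (m + \<delta>)" using m dpos by simp
  then obtain h where h: "h \<in> sphere 0 1" "dir_deriv f xb h < ereal (m + \<delta>)"
    by (auto simp: INF_less_iff)
  then obtain t where t: "t > 0" "f (xb + t *\<^sub>R h) / ereal t < ereal (m + \<delta>)"
    unfolding DD by (auto simp: INF_less_iff)
  obtain ft where ft: "f (xb + t *\<^sub>R h) = ereal ft"
    using t pr by (cases "f (xb + t *\<^sub>R h)") auto
  have nh: "norm h = 1" using h by simp
  have ft1: "ft < (m + \<delta>) * t" using t ft by (simp add: field_simps)
  have ft2: "m * t \<le> ft" using lower[OF nh t(1)] ft t by (simp add: field_simps)
  define \<eta> where "\<eta> = 4 * \<delta>"
  define e where "e x = \<eta> * dist xb x" for x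
  define g where "g x = f x + ereal (e x)" for x
  have gfin: "g x \<noteq> \<infinity> \<longleftrightarrow> f x \<noteq> \<infinity>" for x using pr[of x] by (cases "f x") (auto simp: g_def)
  have pg: "plsc_convex g"
    unfolding plsc_convex_def proper_fun_def
  proof (intro conjI)
    show "\<forall>x. g x \<noteq> - \<infinity>" using pr by (simp add: g_def)
    show "\<exists>x. g x \<noteq> \<infinity>" using ex gfin by blast
    show "lsc_fun g" unfolding g_def e_def
      by (rule lsc_add[OF lf pr]) (intro continuous_intros)
    show "convex_fun g" unfolding g_def e_def
      using dpos by (intro convex_add[OF cf pr] convex_on_cmul convex_on_dist) (auto simp: \<eta>_def)
  qed
  have gxb: "g xb = 0" by (simp add: g_def e_def fxb)
  have dom: "{x. f x \<noteq> \<infinity>} = {x. g x \<noteq> \<infinity>}" using gfin by auto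
  have "lip_diff f g \<le> ereal \<eta>"
    unfolding lip_diff_def if_P[OF dom]
  proof (rule SUP_least, clarify)
    fix u v assume uv: "f u \<noteq> \<infinity>" "f v \<noteq> \<infinity>" "u \<noteq> v"
    have ru: "real_of_ereal (g u) = real_of_ereal (f u) + e u" using uv pr[of u]
      by (cases "f u") (auto simp: g_def)
    have rv: "real_of_ereal (g v) = real_of_ereal (f v) + e v" using uv pr[of v]
      by (cases "f v") (auto simp: g_def)
    have "\<bar>dist xb v - dist xb u\<bar> \<le> norm (u - v)"
      using dist_triangle[of xb v u] dist_triangle[of xb u v] by (simp add: dist_norm norm_minus_commute abs_le_iff)
    then have "\<bar>(real_of_ereal (f u) - real_of_ereal (g u)) - (real_of_ereal (f v) - real_of_ereal (g v))\<bar>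
        \<le> \<eta> * norm (u - v)"
      unfolding ru rv e_def using dpos
      by (simp add: \<eta>_def abs_mult flip: right_diff_distrib)
    then show "ereal (\<bar>(real_of_ereal (f u) - real_of_ereal (g u)) - (real_of_ereal (f v) - real_of_ereal (g v))\<bar> / norm (u - v)) \<le> ereal \<eta>"
      using uv by (simp add: divide_le_eq)
  qed
  also have "\<dots> < ereal \<epsilon>" using d1 dpos by (simp add: \<eta>_def)
  finally have lip: "lip_diff f g < ereal \<epsilon>" .
  have "xb \<in> frontier (sublev f) \<inter> g -` {0}" using xb gxb by simp
  then have tm: "tau_min g \<le> ereal c" using H pg lip by blast
  have Sg: "z = xb" if "z \<in> sublev g" for z
  proof (rule ccontr)
    assume nz: "z \<noteq> xb"
    define d where "d = norm (z - xb)"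
    have dp: "d > 0" using nz by (simp add: d_def)
    define u where "u = (1/d) *\<^sub>R (z - xb)"
    have nu: "norm u = 1" using dp by (simp add: u_def d_def)
    have zu: "xb + d *\<^sub>R u = z" using dp by (simp add: u_def)
    have gz: "g z \<le> 0" using that by (simp add: sublev_def)
    then have "f z \<noteq> \<infinity>" using gfin[of z] by auto
    then obtain fz where fz: "f z = ereal fz" using pr[of z] by (cases "f z") auto
    have "ereal m \<le> ereal (fz / d)" using lower[OF nu dp] zu fz dp by simp
    then have A1: "m * d \<le> fz" using dp by (simp add: field_simps)
    have mlow: "- (2 * \<delta>) < m" using m(2) by (simp add: abs_less_iff)
    have "- (2 * \<delta>) * d < m * d" using mlow dp by (rule mult_strict_right_mono)
    then have A2: "m * d > - (2 * (\<delta> * d))" by simp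
    have A3: "\<eta> * d = 4 * (\<delta> * d)" by (simp add: \<eta>_def)
    have A4: "\<delta> * d > 0" using dpos dp by simp
    have "g z = ereal (fz + \<eta> * d)" using fz by (simp add: g_def e_def d_def dist_norm norm_minus_commute)
    moreover have "fz + \<eta> * d > 0" using A1 A2 A3 A4 by linarith
    ultimately have "g z > 0" by (simp add: zero_ereal_def)
    then show False using gz by simp
  qed
  define y where "y = xb + t *\<^sub>R h"
  have dy: "dist y xb = t" using nh t by (simp add: y_def dist_norm)
  have gy: "g y = ereal (ft + \<eta> * t)" using ft dy by (simp add: g_def e_def y_def dist_commute)
  have gyp: "ft + \<eta> * t > 0"
  proof -
    have mlow: "- (2 * \<delta>) < m" using m(2) by (simp add: abs_less_iff)
    have "- (2 * \<delta>) * t < m * t" using mlow t(1) by (rule mult_strict_right_mono)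
    then have B1: "m * t > - (2 * (\<delta> * t))" by simp
    have B2: "\<eta> * t = 4 * (\<delta> * t)" by (simp add: \<eta>_def)
    have B3: "\<delta> * t > 0" using dpos t by simp
    show ?thesis using B1 B2 B3 ft2 by linarith
  qed
  have gyu: "ft + \<eta> * t < 7 * \<delta> * t"
  proof -
    have mup: "m + \<delta> < 3 * \<delta>" using m(2) by (simp add: abs_less_iff)
    have "(m + \<delta>) * t < (3 * \<delta>) * t" using mup t(1) by (rule mult_strict_right_mono)
    moreover have "\<eta> * t = 4 * \<delta> * t" by (simp add: \<eta>_def)
    moreover have "7 * \<delta> * t = 3 * \<delta> * t + 4 * \<delta> * t" by (simp add: algebra_simps)
    ultimately show ?thesis using ft1 by linarith
  qed
  have "ereal (1 / (7 * \<delta>)) \<le> tau_min g"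
    unfolding tau_min_def
  proof (rule Inf_greatest, clarify)
    fix \<tau>' assume tp: "\<tau>' > 0" and all: "\<forall>x. setdist_e x (sublev g) \<le> ereal \<tau>' * max (g x) 0"
    have "ereal t \<le> setdist_e y (sublev g)" unfolding setdist_e_def
    proof (rule INF_greatest)
      fix z assume "z \<in> sublev g"
      then have "z = xb" by (rule Sg)
      then show "ereal t \<le> ereal (dist y z)" using dy by simp
    qed
    also have "\<dots> \<le> ereal \<tau>' * max (g y) 0" using all by blast
    also have "\<dots> = ereal (\<tau>' * (ft + \<eta> * t))" using gy gyp by (simp add: max_def zero_ereal_def)
    finally have "t \<le> \<tau>' * (ft + \<eta> * t)" by simp
    also have "\<dots> < \<tau>' * (7 * \<delta> * t)" using gyu tp by simp
    finally have "1 < \<tau>' * (7 * \<delta>)" using t by (simp add: algebra_simps)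
    then show "ereal (1 / (7 * \<delta>)) \<le> ereal \<tau>'" using dpos by (simp add: field_simps)
  qed
  moreover have "c < 1 / (7 * \<delta>)"
  proof -
    have "c * (8 * \<delta>) \<le> 1" using d1(2) cpos by (simp add: field_simps)
    then have "c * (7 * \<delta>) < 1" using cpos dpos by simp
    then show ?thesis using dpos by (simp add: field_simps)
  qed
  ultimately have "ereal (1 / (7 * \<delta>)) \<le> ereal c" using tm by (meson order_trans)
  then show False using \<open>c < 1 / (7 * \<delta>)\<close> by simp
qed


theorem theorem7:
  fixes f :: "real ^ 'm \<Rightarrow> ereal"
  assumes hf: "plsc_convex f"
    and hS: "sublev f \<noteq> {}"
    and hbd: "frontier (sublev f) \<subseteq> f -` {0}"
  defines "stmt_i \<equiv> (\<exists>\<tau>::real. \<tau> > 0 \<and>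
      (INF xb\<in>frontier (sublev f). \<bar>INF h\<in>sphere 0 1. dir_deriv f xb h\<bar>) > ereal \<tau>)"
    and "stmt_ii \<equiv> (\<exists>c \<epsilon>::real. c > 0 \<and> \<epsilon> > 0 \<and>
      (\<forall>g :: real ^ 'm \<Rightarrow> ereal. plsc_convex g \<and> sublev f \<subseteq> sublev g
          \<and> lip_diff f g < ereal \<epsilon> \<longrightarrow> tau_min g \<le> ereal c))"
    and "stmt_iii \<equiv> (\<exists>c \<epsilon>::real. c > 0 \<and> \<epsilon> > 0 \<and>
      (\<forall>g :: real ^ 'm \<Rightarrow> ereal. plsc_convex g \<and> frontier (sublev f) \<inter> g -` {0} \<noteq> {}
          \<and> lip_diff f g < ereal \<epsilon> \<longrightarrow> tau_min g \<le> ereal c))"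
  shows "(stmt_i \<longrightarrow> stmt_ii) \<and> (stmt_iii \<longrightarrow> stmt_i)"
proof (intro conjI impI)
  assume "stmt_i"
  then obtain \<tau> where "\<tau> > 0" "(INF xb\<in>frontier (sublev f). \<bar>INF h\<in>sphere 0 1. dir_deriv f xb h\<bar>) > ereal \<tau>"
    unfolding stmt_i_def by blast
  then show "stmt_ii" unfolding stmt_ii_def by (rule part1[OF hf hS hbd])
next
  assume "stmt_iii"
  then obtain c \<epsilon> :: real where "c > 0" "\<epsilon> > 0" "\<forall>g :: real ^ 'm \<Rightarrow> ereal. plsc_convex g \<and> frontier (sublev f) \<inter> g -` {0} \<noteq> {}
          \<and> lip_diff f g < ereal \<epsilon> \<longrightarrow> tau_min g \<le> ereal c"
    unfolding stmt_iii_def by blast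
  then show "stmt_i" unfolding stmt_i_def by (rule part2[OF hf hbd])
qed

end
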